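(* For every connected graph $G$ with at least two vertices, there is a simple protocol solving multiparty equality on $G$ in the local broadcast model whose per-bit cost is at most $2\cdot\frac{\gamma(G)}{\gamma_f(G)}\cdot \mathrm{opt}(G)$.
   Context: Multiparty equality in the local broadcast model: every vertex $v$ of a connected graph $G$ receives an input $\lambda(v)\in\{0,1\}^k$. Vertices communicate by broadcasting messages, received by all neighbours and counted once. Protocols are deterministic and static: which vertices send and message lengths depend only on $G$ and $k$, contents may depend on inputs. At the end every vertex accepts or rejects; the protocol solves the problem if all vertices accept when all inputs are equal and at least one rejects when two inputs differ. Total cost = sum of the numbers of bits broadcast; $\mathrm{opt}(G,k)$ is the minimum total cost of a solving protocol and $\mathrm{opt}(G)=\lim_{k\to\infty}\mathrm{opt}(G,k)/k$. A simple protocol: each vertex of a fixed set $S$ broadcasts its whole input, others are silent, and each vertex accepts iff all inputs it received equal its own; its per-bit cost is $|S|$. $\gamma(G)$ is the domination number and $\gamma_f(G)$ the fractional domination number (minimum of $\sum_v x(v)$ over $x\ge0$ with $\sum_{u\in N[v]}x(u)\ge1$ for all $v$, $N[v]$ the closed neighbourhood). *)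

theory Defs
  imports Complex_Main
begin

definition graph :: "'v set \<Rightarrow> ('v \<Rightarrow> 'v \<Rightarrow> bool) \<Rightarrow> bool" where
  "graph V E \<longleftrightarrow> finite V \<and> (\<forall>u v. E u v \<longrightarrow> u \<in> V \<and> v \<in> V)
     \<and> (\<forall>u v. E u v \<longrightarrow> E v u) \<and> (\<forall>v. \<not> E v v)"

definition connected_graph :: "'v set \<Rightarrow> ('v \<Rightarrow> 'v \<Rightarrow> bool) \<Rightarrow> bool" where
  "connected_graph V E \<longleftrightarrow> (\<forall>u\<in>V. \<forall>v\<in>V. E\<^sup>*\<^sup>* u v)"

definition cnbhd :: "'v set \<Rightarrow> ('v \<Rightarrow> 'v \<Rightarrow> bool) \<Rightarrow> 'v \<Rightarrow> 'v set" where
  "cnbhd V E v = {u \<in> V. u = v \<or> E u v}"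

definition dominating :: "'v set \<Rightarrow> ('v \<Rightarrow> 'v \<Rightarrow> bool) \<Rightarrow> 'v set \<Rightarrow> bool" where
  "dominating V E D \<longleftrightarrow> D \<subseteq> V \<and> (\<forall>v\<in>V. D \<inter> cnbhd V E v \<noteq> {})"

definition domination_number :: "'v set \<Rightarrow> ('v \<Rightarrow> 'v \<Rightarrow> bool) \<Rightarrow> nat" where
  "domination_number V E = Min {card D | D. dominating V E D}"

definition frac_domination_number :: "'v set \<Rightarrow> ('v \<Rightarrow> 'v \<Rightarrow> bool) \<Rightarrow> real" where
  "frac_domination_number V E = Inf {(\<Sum>v\<in>V. x v) | x :: 'v \<Rightarrow> real.
      (\<forall>v\<in>V. 0 \<le> x v) \<and> (\<forall>v\<in>V. (\<Sum>u\<in>cnbhd V E v. x u) \<ge> 1)}"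

text \<open>A view is the sequence of all broadcasts so far, where a broadcast is visible
  (Some m) to vertex u iff its sender lies in N[u], otherwise None.
  A step (v, l, f): vertex v broadcasts l bits, the content computed by f from v's input and
  v's current view; the output of f is forced to length l by padding/truncation (fit).
  Senders and lengths are fixed (static protocol); contents depend on inputs.
  A protocol is a list of steps together with a decision function:
  vertex u accepts iff dec u (input of u) (final view of u).\<close>

type_synonym view = "bool list option list"
type_synonym 'v step = "'v \<times> nat \<times> (bool list \<Rightarrow> view \<Rightarrow> bool list)"
type_synonym 'v protocol = "'v step list \<times> ('v \<Rightarrow> bool list \<Rightarrow> view \<Rightarrow> bool)"

definition fit :: "nat \<Rightarrow> bool list \<Rightarrow> bool list" where
  "fit l w = take l (w @ replicate l False)"

definition view_of :: "('v \<Rightarrow> 'v \<Rightarrow> bool) \<Rightarrow> 'v list \<Rightarrow> bool list list \<Rightarrow> 'v \<Rightarrow> view" where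
  "view_of E ss ms u = map (\<lambda>(s, m). if s = u \<or> E s u then Some m else None) (zip ss ms)"

definition run_step :: "('v \<Rightarrow> 'v \<Rightarrow> bool) \<Rightarrow> ('v \<Rightarrow> bool list)
    \<Rightarrow> 'v list \<times> bool list list \<Rightarrow> 'v step \<Rightarrow> 'v list \<times> bool list list" where
  "run_step E lam st stp = (case st of (ss, ms) \<Rightarrow> (case stp of (v, l, f) \<Rightarrow>
      (ss @ [v], ms @ [fit l (f (lam v) (view_of E ss ms v))])))"

definition exec :: "('v \<Rightarrow> 'v \<Rightarrow> bool) \<Rightarrow> 'v step list \<Rightarrow> ('v \<Rightarrow> bool list)
    \<Rightarrow> 'v list \<times> bool list list" where
  "exec E steps lam = foldl (run_step E lam) ([], []) steps"

definition accepts :: "('v \<Rightarrow> 'v \<Rightarrow> bool) \<Rightarrow> 'v protocol \<Rightarrow> ('v \<Rightarrow> bool list) \<Rightarrow> 'v \<Rightarrow> bool" where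
  "accepts E P lam u = (case exec E (fst P) lam of (ss, ms) \<Rightarrow> snd P u (lam u) (view_of E ss ms u))"

definition cost :: "'v protocol \<Rightarrow> nat" where
  "cost P = sum_list (map (\<lambda>(v, l, f). l) (fst P))"

definition solves :: "'v set \<Rightarrow> ('v \<Rightarrow> 'v \<Rightarrow> bool) \<Rightarrow> nat \<Rightarrow> 'v protocol \<Rightarrow> bool" where
  "solves V E k P \<longleftrightarrow> (\<forall>(v, l, f) \<in> set (fst P). v \<in> V) \<and>
     (\<forall>lam. (\<forall>v\<in>V. length (lam v) = k) \<longrightarrow>
        ((\<forall>u\<in>V. \<forall>v\<in>V. lam u = lam v) \<longrightarrow> (\<forall>v\<in>V. accepts E P lam v)) \<and>
        ((\<exists>u\<in>V. \<exists>v\<in>V. lam u \<noteq> lam v) \<longrightarrow> (\<exists>v\<in>V. \<not> accepts E P lam v)))"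

definition opt :: "'v set \<Rightarrow> ('v \<Rightarrow> 'v \<Rightarrow> bool) \<Rightarrow> nat \<Rightarrow> nat" where
  "opt V E k = Inf {cost P | P. solves V E k P}"

definition opt_rate :: "'v set \<Rightarrow> ('v \<Rightarrow> 'v \<Rightarrow> bool) \<Rightarrow> real" where
  "opt_rate V E = lim (\<lambda>k. real (opt V E k) / real k)"

definition simple_protocol :: "'v list \<Rightarrow> nat \<Rightarrow> 'v protocol" where
  "simple_protocol ss k =
     (map (\<lambda>v. (v, k, (\<lambda>x vw. x))) ss,
      (\<lambda>u x vw. \<forall>m\<in>set vw. m = None \<or> m = Some x))"

end

theory Submission
  imports Defs
begin


lemma exec_snoc: "exec E (st @ [s]) lam = run_step E lam (exec E st lam) s"
  by (simp add: exec_def)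

lemma exec_Nil: "exec E [] lam = ([], [])" by (simp add: exec_def)

lemma exec_fst: "fst (exec E st lam) = map fst st"
  by (induction st rule: rev_induct)
     (auto simp: exec_Nil exec_snoc run_step_def split: prod.splits)

lemma exec_len: "map length (snd (exec E st lam)) = map (\<lambda>(s,l,f). l) st"
  by (induction st rule: rev_induct)
     (auto simp: exec_Nil exec_snoc run_step_def fit_def split: prod.splits)

lemma exec_len': "length (snd (exec E st lam)) = length st"
  using arg_cong[OF exec_len[of E st lam], of length] by simp

lemma view_of_nth: "j < length ss \<Longrightarrow> j < length ms \<Longrightarrow>
   view_of E ss ms u ! j = (if ss!j = u \<or> E (ss!j) u then Some (ms!j) else None)"
  by (simp add: view_of_def)

lemma view_of_len: "length (view_of E ss ms u) = min (length ss) (length ms)"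
  by (simp add: view_of_def)

lemma view_of_eqI:
  assumes "length ms = length ss" "length ms' = length ss"
    "\<And>j. j < length ss \<Longrightarrow> ss!j = u \<or> E (ss!j) u \<Longrightarrow> ms!j = ms'!j"
  shows "view_of E ss ms u = view_of E ss ms' u"
  by (rule nth_equalityI) (use assms in \<open>auto simp: view_of_len view_of_nth\<close>)



lemma exec_snoc': "exec E (st @ [(w,l,f)]) lam =
   (map fst st @ [w], snd (exec E st lam) @ [fit l (f (lam w) (view_of E (map fst st) (snd (exec E st lam)) w))])"
  using exec_fst[of E st lam] by (cases "exec E st lam") (simp add: exec_snoc run_step_def)

lemma hybrid:
  fixes x y :: "bool list"
  assumes "\<forall>j<length st. fst (st!j) = v \<or> E (fst (st!j)) v \<longrightarrow>
             snd (exec E st (\<lambda>_. x)) ! j = snd (exec E st (\<lambda>_. y)) ! j"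
  shows "snd (exec E st (\<lambda>u. if u = v then x else y)) =
     map (\<lambda>j. if fst (st!j) = v then snd (exec E st (\<lambda>_. x)) ! j else snd (exec E st (\<lambda>_. y)) ! j) [0..<length st]"
  using assms
proof (induction st rule: rev_induct)
  case Nil then show ?case by (simp add: exec_Nil)
next
  case (snoc s st)
  obtain w l f where s: "s = (w,l,f)" by (cases s) auto
  define h where "h = (\<lambda>u. if u = v then x else y)"
  define mx where "mx = snd (exec E st (\<lambda>_. x))"
  define my where "my = snd (exec E st (\<lambda>_. y))"
  define mh where "mh = snd (exec E st h)"
  have lx: "length mx = length st" and ly: "length my = length st" and lh: "length mh = length st"
    by (simp_all add: mx_def my_def mh_def exec_len')
  have ex: "snd (exec E (st@[s]) (\<lambda>_. x)) = mx @ [fit l (f x (view_of E (map fst st) mx w))]"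
    by (simp add: s exec_snoc' mx_def)
  have ey: "snd (exec E (st@[s]) (\<lambda>_. y)) = my @ [fit l (f y (view_of E (map fst st) my w))]"
    by (simp add: s exec_snoc' my_def)
  have eh: "snd (exec E (st@[s]) h) = mh @ [fit l (f (h w) (view_of E (map fst st) mh w))]"
    by (simp add: s exec_snoc' mh_def)
  have H: "\<forall>j<length st. fst (st!j) = v \<or> E (fst (st!j)) v \<longrightarrow> mx ! j = my ! j"
  proof (intro allI impI)
    fix j assume j: "j < length st" and N: "fst (st!j) = v \<or> E (fst (st!j)) v"
    have "snd (exec E (st@[s]) (\<lambda>_. x)) ! j = snd (exec E (st@[s]) (\<lambda>_. y)) ! j"
      using snoc.prems j N by (auto simp: nth_append)
    then show "mx ! j = my ! j" using j lx ly by (simp add: ex ey nth_append)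
  qed
  have IH: "mh = map (\<lambda>j. if fst (st!j) = v then mx ! j else my ! j) [0..<length st]"
    using snoc.IH[OF H[unfolded mx_def my_def]] by (simp add: mh_def mx_def my_def h_def)
  have last_eq: "fit l (f (h w) (view_of E (map fst st) mh w)) =
      (if w = v then fit l (f x (view_of E (map fst st) mx w)) else fit l (f y (view_of E (map fst st) my w)))"
  proof (cases "w = v")
    case True
    have "view_of E (map fst st) mh w = view_of E (map fst st) mx w"
      by (rule view_of_eqI) (use lh lx H True in \<open>auto simp: IH\<close>)
    then show ?thesis using True by (simp add: h_def)
  next
    case False
    have "view_of E (map fst st) mh w = view_of E (map fst st) my w"
      by (rule view_of_eqI) (use lh ly H False in \<open>auto simp: IH\<close>)
    then show ?thesis using False by (simp add: h_def)
  qed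
  show ?case
    unfolding h_def[symmetric] eh ex ey last_eq
    by (rule nth_equalityI) (auto simp: lh lx ly IH nth_append s)
qed



lemma accepts_alt: "accepts E P lam u =
   snd P u (lam u) (view_of E (map fst (fst P)) (snd (exec E (fst P) lam)) u)"
  using exec_fst[of E "fst P" lam]
  by (cases "exec E (fst P) lam") (simp add: accepts_def)

lemma concat_inj: "map length as = map length bs \<Longrightarrow> concat as = concat bs \<Longrightarrow> as = bs"
proof (induction as arbitrary: bs)
  case Nil then show ?case by simp
next
  case (Cons a as)
  then obtain b bs' where bs: "bs = b # bs'" by (cases bs) auto
  with Cons.prems have "length a = length b" "concat as = concat bs'" "map length as = map length bs'"
    by auto
  with Cons show ?case by (simp add: bs)
qed

definition msk :: "('v \<Rightarrow> 'v \<Rightarrow> bool) \<Rightarrow> 'v \<Rightarrow> 'v step list \<Rightarrow> bool list list \<Rightarrow> bool list list" where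
  "msk E v st ms = map (\<lambda>j. if fst (st!j) = v \<or> E (fst (st!j)) v then ms!j else []) [0..<length st]"

lemma msk_len: "map length (msk E v st (snd (exec E st lam))) =
   map (\<lambda>(s,l,f). if s = v \<or> E s v then l else 0) st"
proof (rule nth_equalityI)
  show "length (map length (msk E v st (snd (exec E st lam)))) =
        length (map (\<lambda>(s,l,f). if s = v \<or> E s v then l else 0) st)" by (simp add: msk_def)
next
  fix j assume j: "j < length (map length (msk E v st (snd (exec E st lam))))"
  then have j': "j < length st" by (simp add: msk_def)
  have "map length (snd (exec E st lam)) ! j = map (\<lambda>(s,l,f). l) st ! j" by (simp add: exec_len)
  then have "length (snd (exec E st lam) ! j) = fst (snd (st!j))"
    using j' exec_len'[of E st lam] by (simp add: case_prod_beta)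
  then show "map length (msk E v st (snd (exec E st lam))) ! j =
        map (\<lambda>(s,l,f). if s = v \<or> E s v then l else 0) st ! j"
    using j' by (simp add: msk_def case_prod_beta)
qed

lemma card_bool_lists: "card {x :: bool list. length x = n} = 2 ^ n"
proof -
  have "card {xs. set xs \<subseteq> (UNIV::bool set) \<and> length xs = n} = card (UNIV::bool set)^n"
    by (rule card_lists_length_eq) simp
  then show ?thesis by simp
qed

lemma finite_bool_lists: "finite {x :: bool list. length x = n}"
proof -
  have "{x :: bool list. length x = n} = {xs. set xs \<subseteq> UNIV \<and> length xs = n}" by simp
  then show ?thesis using finite_lists_length_eq[of "UNIV :: bool set" n] by simp
qed

lemma solves_const: "solves V E k P \<Longrightarrow> length x = k \<Longrightarrow> w \<in> V \<Longrightarrow> accepts E P (\<lambda>_. x) w"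
  unfolding solves_def by (drule conjunct2, drule spec[of _ "\<lambda>_. x"]) auto

lemma solves_rej: "solves V E k P \<Longrightarrow> \<forall>v\<in>V. length (lam v) = k \<Longrightarrow> \<exists>a\<in>V. \<exists>b\<in>V. lam a \<noteq> lam b
   \<Longrightarrow> \<exists>w\<in>V. \<not> accepts E P lam w"
  unfolding solves_def by (drule conjunct2, drule spec[of _ lam]) auto

lemma nbhd_bound:
  assumes sol: "solves V E k P" and v: "v \<in> V" and u0: "u0 \<in> V" "u0 \<noteq> v"
  shows "k \<le> sum_list (map (\<lambda>(s,l,f). if s = v \<or> E s v then l else 0) (fst P))"
proof (rule ccontr)
  define st where "st = fst P"
  define L where "L = sum_list (map (\<lambda>(s,l,f). if s = v \<or> E s v then l else 0) st)"
  assume "\<not> ?thesis"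
  then have Lk: "L < k" by (simp add: L_def st_def)
  define T where "T = (\<lambda>x :: bool list. concat (msk E v st (snd (exec E st (\<lambda>_. x)))))"
  define A where "A = {x :: bool list. length x = k}"
  have TL: "length (T x) = L" for x
    unfolding T_def length_concat L_def using msk_len[of E v st "\<lambda>_. x"] by (simp add: comp_def)
  have "\<not> inj_on T A"
  proof
    assume inj: "inj_on T A"
    have "card A \<le> card {w :: bool list. length w = L}"
      by (rule card_inj_on_le[OF inj]) (auto simp: TL finite_bool_lists)
    then have "(2::nat) ^ k \<le> 2 ^ L" by (simp add: A_def card_bool_lists)
    then show False using Lk by simp
  qed
  then obtain x y where xA: "x \<in> A" and yA: "y \<in> A" and xy: "x \<noteq> y" and Txy: "T x = T y"
    unfolding inj_on_def by blast
  define mx where "mx = snd (exec E st (\<lambda>_. x))"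
  define my where "my = snd (exec E st (\<lambda>_. y))"
  have lx: "length mx = length st" and ly: "length my = length st"
    by (simp_all add: mx_def my_def exec_len')
  have "msk E v st mx = msk E v st my"
    by (rule concat_inj) (use Txy in \<open>simp_all add: mx_def my_def msk_len T_def\<close>)
  then have H: "\<forall>j<length st. fst (st!j) = v \<or> E (fst (st!j)) v \<longrightarrow> mx ! j = my ! j"
  proof (intro allI impI)
    fix j assume eq: "msk E v st mx = msk E v st my" and j: "j < length st"
      and N: "fst (st!j) = v \<or> E (fst (st!j)) v"
    have "msk E v st mx ! j = msk E v st my ! j" using eq by simp
    then show "mx ! j = my ! j" using j N by (simp add: msk_def)
  qed
  define h where "h = (\<lambda>u. if u = v then x else y)"
  have hyb: "snd (exec E st h) = map (\<lambda>j. if fst (st!j) = v then mx ! j else my ! j) [0..<length st]"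
    using hybrid[of st v E x y] H by (simp add: h_def mx_def my_def)
  have lenx: "\<forall>w\<in>V. length ((\<lambda>_. x) w) = k" and leny: "\<forall>w\<in>V. length ((\<lambda>_. y) w) = k"
    and lenh: "\<forall>w\<in>V. length (h w) = k"
    using xA yA by (auto simp: A_def h_def)
  have accx: "accepts E P (\<lambda>_. x) v" using solves_const[OF sol _ v] xA by (simp add: A_def)
  have accy: "\<forall>u\<in>V. accepts E P (\<lambda>_. y) u" using solves_const[OF sol] yA by (simp add: A_def)
  have "\<exists>w\<in>V. \<not> accepts E P h w"
  proof -
    have "\<exists>a\<in>V. \<exists>b\<in>V. h a \<noteq> h b" using v u0 xy by (auto simp: h_def intro!: bexI[of _ v] bexI[of _ u0])
    then show ?thesis using solves_rej[OF sol lenh] by blast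
  qed
  then obtain w where w: "w \<in> V" "\<not> accepts E P h w" by blast
  show False
  proof (cases "w = v")
    case True
    have "view_of E (map fst st) (snd (exec E st h)) v = view_of E (map fst st) mx v"
      by (rule view_of_eqI) (use lx ly H in \<open>auto simp: hyb\<close>)
    then have "accepts E P h v = accepts E P (\<lambda>_. x) v"
      by (simp add: accepts_alt st_def[symmetric] mx_def h_def)
    then show False using w True accx by simp
  next
    case False
    have "view_of E (map fst st) (snd (exec E st h)) w = view_of E (map fst st) my w"
      by (rule view_of_eqI) (use lx ly H in \<open>auto simp: hyb\<close>)
    then have "accepts E P h w = accepts E P (\<lambda>_. y) w"
      using False by (simp add: accepts_alt st_def[symmetric] my_def h_def)
    then show False using w accy by simp
  qed
qed



lemma sum_wt: "finite A \<Longrightarrow> (\<Sum>u\<in>A. sum_list (map (\<lambda>(s,l,f). if s = u then l else 0) st)) =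
   sum_list (map (\<lambda>(s,l,f). if s \<in> A then (l::nat) else 0) st)"
proof (induction st)
  case Nil then show ?case by simp
next
  case (Cons a st)
  obtain s l f where a: "a = (s,l,f)" by (cases a) auto
  have "(\<Sum>u\<in>A. (if s = u then l else 0)) = (if s \<in> A then l else 0)"
    using Cons.prems by (simp add: sum.delta)
  then show ?case using Cons by (simp add: a sum.distrib)
qed

lemma mem_ne: "a \<in> A \<Longrightarrow> A \<noteq> {}" by auto

lemma frac_ge1: assumes "graph V E" "V \<noteq> {}" shows "frac_domination_number V E \<ge> 1"
  unfolding frac_domination_number_def
proof (rule cInf_greatest)
  show "{\<Sum>v\<in>V. x v |x. (\<forall>v\<in>V. (0::real) \<le> x v) \<and> (\<forall>v\<in>V. 1 \<le> sum x (cnbhd V E v))} \<noteq> {}"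
proof -
    define y where "y = (\<lambda>_::'a. 1::real)"
    have "\<forall>v\<in>V. 1 \<le> sum y (cnbhd V E v)"
    proof
      fix v assume v: "v \<in> V"
      have fin: "finite (cnbhd V E v)" using assms(1) by (simp add: graph_def cnbhd_def)
      have "v \<in> cnbhd V E v" using v by (simp add: cnbhd_def)
      then have "card (cnbhd V E v) \<ge> 1" using fin by (auto simp: Suc_le_eq card_gt_0_iff)
      then show "1 \<le> sum y (cnbhd V E v)" by (simp add: y_def)
    qed
    moreover have "\<forall>v\<in>V. 0 \<le> y v" by (simp add: y_def)
    ultimately have "sum y V \<in> {\<Sum>v\<in>V. x v |x. (\<forall>v\<in>V. (0::real) \<le> x v) \<and> (\<forall>v\<in>V. 1 \<le> sum x (cnbhd V E v))}"
      unfolding mem_Collect_eq by (intro exI[of _ y] conjI refl)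
    then show ?thesis by (rule mem_ne)
  qed
next
  fix r assume "r \<in> {\<Sum>v\<in>V. x v |x. (\<forall>v\<in>V. (0::real) \<le> x v) \<and> (\<forall>v\<in>V. 1 \<le> sum x (cnbhd V E v))}"
  then obtain x where r: "r = (\<Sum>v\<in>V. x v)" and nn: "\<forall>v\<in>V. 0 \<le> x v"
    and c: "\<forall>v\<in>V. 1 \<le> sum x (cnbhd V E v)" by blast
  obtain v where v: "v \<in> V" using assms(2) by blast
  have "sum x (cnbhd V E v) \<le> sum x V"
  proof -
    have "finite V" using assms(1) by (simp add: graph_def)
    moreover have "cnbhd V E v \<subseteq> V" by (auto simp: cnbhd_def)
    ultimately show ?thesis using sum_mono2[of V "cnbhd V E v" x] nn by blast
  qed
  moreover have "1 \<le> sum x (cnbhd V E v)" using c v by blast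
  ultimately show "1 \<le> r" using r by linarith
qed

lemma frac_le:
  assumes g: "graph V E" and c2: "card V \<ge> 2" and sol: "solves V E k P" and k: "k \<ge> 1"
  shows "frac_domination_number V E * real k \<le> real (cost P)"
proof -
  define st where "st = fst P"
  have sV: "\<forall>(s,l,f)\<in>set st. s \<in> V" using sol by (simp add: solves_def st_def)
  have fin: "finite V" using g by (simp add: graph_def)
  define x where "x = (\<lambda>u. real (sum_list (map (\<lambda>(s,l,f). if s = u then l else 0) st)) / real k)"
  have "frac_domination_number V E \<le> (\<Sum>v\<in>V. x v)"
    unfolding frac_domination_number_def
  proof (rule cInf_lower)
    show "bdd_below {\<Sum>v\<in>V. x v |x. (\<forall>v\<in>V. (0::real) \<le> x v) \<and> (\<forall>v\<in>V. 1 \<le> sum x (cnbhd V E v))}"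
      proof (rule bdd_belowI[of _ 0])
      fix r assume "r \<in> {\<Sum>v\<in>V. x v |x. (\<forall>v\<in>V. (0::real) \<le> x v) \<and> (\<forall>v\<in>V. 1 \<le> sum x (cnbhd V E v))}"
      then obtain y where "r = (\<Sum>v\<in>V. y v)" "\<forall>v\<in>V. 0 \<le> y v" by blast
      then show "0 \<le> r" by (auto intro!: sum_nonneg)
    qed
    have "\<forall>v\<in>V. 1 \<le> sum x (cnbhd V E v)"
    proof
      fix v assume v: "v \<in> V"
      have "V - {v} \<noteq> {}"
      proof
        assume "V - {v} = {}" then have "V \<subseteq> {v}" by blast
        then have "card V \<le> card {v}" by (intro card_mono) simp_all
        then have "card V \<le> 1" by simp
        then show False using c2 by simp
      qed
      then obtain u0 where u0: "u0 \<in> V" "u0 \<noteq> v" by blast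
      have kb: "k \<le> sum_list (map (\<lambda>(s,l,f). if s = v \<or> E s v then l else 0) st)"
        using nbhd_bound[OF sol v u0] by (simp add: st_def)
      have finN: "finite (cnbhd V E v)" using fin by (simp add: cnbhd_def)
      have "map (\<lambda>(s,l,f). if s \<in> cnbhd V E v then l else 0) st = map (\<lambda>(s,l,f). if s = v \<or> E s v then l else 0) st"
        by (rule map_cong) (use sV in \<open>auto simp: cnbhd_def\<close>)
      note me = this
      have eq: "(\<Sum>u\<in>cnbhd V E v. sum_list (map (\<lambda>(s,l,f). if s = u then l else 0) st)) =
          sum_list (map (\<lambda>(s,l,f). if s = v \<or> E s v then l else 0) st)"
        using sum_wt[OF finN, of st] unfolding me .
      have "sum x (cnbhd V E v) = real (\<Sum>u\<in>cnbhd V E v. sum_list (map (\<lambda>(s,l,f). if s = u then l else 0) st)) / real k"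
        by (simp add: x_def sum_divide_distrib)
      also have "\<dots> \<ge> 1" using kb k by (simp add: eq)
      finally show "1 \<le> sum x (cnbhd V E v)" .
    qed
    then show "(\<Sum>v\<in>V. x v) \<in> {\<Sum>v\<in>V. x v |x. (\<forall>v\<in>V. (0::real) \<le> x v) \<and> (\<forall>v\<in>V. 1 \<le> sum x (cnbhd V E v))}"
      by (auto simp: x_def)
  qed
  also have "(\<Sum>v\<in>V. x v) = real (cost P) / real k"
  proof -
    have "map (\<lambda>(s,l,f). if s \<in> V then l else 0) st = map (\<lambda>(s,l,f). l) st"
      by (rule map_cong) (use sV in auto)
    note me = this
    have "(\<Sum>u\<in>V. sum_list (map (\<lambda>(s,l,f). if s = u then l else 0) st)) = cost P"
      using sum_wt[OF fin, of st] unfolding me by (simp add: cost_def st_def)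
    then show ?thesis by (simp add: x_def sum_divide_distrib[symmetric] flip: of_nat_sum)
  qed
  finally show ?thesis using k by (simp add: field_simps)
qed



lemma exec_simple: "snd (exec E (map (\<lambda>v. (v, k, (\<lambda>x vw. x))) ss) lam) = map (\<lambda>v. fit k (lam v)) ss"
  by (induction ss rule: rev_induct) (simp_all add: exec_Nil exec_snoc')

lemma fit_id: "length x = k \<Longrightarrow> fit k x = x" by (simp add: fit_def)

lemma accepts_simple: "accepts E (simple_protocol ss k) lam u \<longleftrightarrow>
   (\<forall>s\<in>set ss. (s = u \<or> E s u) \<longrightarrow> fit k (lam s) = lam u)"
proof -
  have "view_of E ss (map (\<lambda>v. fit k (lam v)) ss) u =
        map (\<lambda>s. if s = u \<or> E s u then Some (fit k (lam s)) else None) ss"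
    by (induction ss) (auto simp: view_of_def)
  then show ?thesis
    by (auto simp: accepts_alt simple_protocol_def exec_simple comp_def)
qed

definition good :: "'v set \<Rightarrow> ('v \<Rightarrow> 'v \<Rightarrow> bool) \<Rightarrow> 'v set \<Rightarrow> bool" where
  "good V E S \<longleftrightarrow> (\<forall>f::'v \<Rightarrow> bool. (\<forall>s\<in>S. \<forall>u\<in>V. (s = u \<or> E s u) \<longrightarrow> f s = f u) \<longrightarrow>
      (\<forall>a\<in>V. \<forall>b\<in>V. f a = f b))"

lemma simple_solves:
  assumes ssV: "set ss \<subseteq> V" and gd: "good V E (set ss)"
  shows "solves V E k (simple_protocol ss k)"
  unfolding solves_def
proof (intro conjI allI impI)
  show "\<forall>(v, l, f)\<in>set (fst (simple_protocol ss k)). v \<in> V"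
    using ssV by (auto simp: simple_protocol_def)
next
  fix lam :: "'a \<Rightarrow> bool list"
  assume len: "\<forall>v\<in>V. length (lam v) = k"
  have fitl: "fit k (lam s) = lam s" if "s \<in> set ss" for s
    using fit_id len ssV that by blast
  {
    assume c: "\<forall>u\<in>V. \<forall>v\<in>V. lam u = lam v"
    show "\<forall>v\<in>V. accepts E (simple_protocol ss k) lam v"
    proof
      fix v assume v: "v \<in> V"
      show "accepts E (simple_protocol ss k) lam v"
        unfolding accepts_simple
      proof (intro ballI impI)
        fix s assume s: "s \<in> set ss"
        then have "s \<in> V" using ssV by blast
        then show "fit k (lam s) = lam v" using fitl[OF s] c v by metis
      qed
    qed
  }
  {
    assume "\<exists>u\<in>V. \<exists>v\<in>V. lam u \<noteq> lam v"
    then obtain a b where ab: "a \<in> V" "b \<in> V" "lam a \<noteq> lam b" by blast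
    show "\<exists>v\<in>V. \<not> accepts E (simple_protocol ss k) lam v"
    proof (rule ccontr)
      assume "\<not> ?thesis"
      then have acc: "\<forall>v\<in>V. \<forall>s\<in>set ss. (s = v \<or> E s v) \<longrightarrow> fit k (lam s) = lam v"
        unfolding accepts_simple by blast
      have acc2: "\<forall>s\<in>set ss. \<forall>v\<in>V. (s = v \<or> E s v) \<longrightarrow> lam s = lam v"
        using acc fitl by metis
      define f where "f = (\<lambda>w. lam w = lam a)"
      have "\<forall>s\<in>set ss. \<forall>u\<in>V. (s = u \<or> E s u) \<longrightarrow> f s = f u"
        using acc2 unfolding f_def by metis
      then have "f a = f b" using gd ab unfolding good_def by blast
      then show False using ab by (simp add: f_def)
    qed
  }
qed

lemma cost_simple: "distinct ss \<Longrightarrow> cost (simple_protocol ss k) = card (set ss) * k"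
  by (induction ss) (auto simp: cost_def simple_protocol_def)

definition Wn :: "'v set \<Rightarrow> ('v \<Rightarrow> 'v \<Rightarrow> bool) \<Rightarrow> 'v set \<Rightarrow> 'v set" where
  "Wn V E C = {u\<in>V. \<exists>c\<in>C. c = u \<or> E c u}"

definition resp :: "'v set \<Rightarrow> ('v \<Rightarrow> 'v \<Rightarrow> bool) \<Rightarrow> 'v set \<Rightarrow> ('v \<Rightarrow> bool) \<Rightarrow> bool" where
  "resp V E S f \<longleftrightarrow> (\<forall>s\<in>S. \<forall>u\<in>V. (s = u \<or> E s u) \<longrightarrow> f s = f u)"

lemma crossing: "E\<^sup>*\<^sup>* a b \<Longrightarrow> a \<in> W \<Longrightarrow> b \<notin> W \<Longrightarrow> \<exists>p q. E p q \<and> p \<in> W \<and> q \<notin> W"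
  by (induction rule: rtranclp_induct) auto

lemma finish:
  assumes g: "graph V E" and dom: "dominating V E D"
    and CD: "C \<subseteq> D" and AV: "A \<subseteq> V" and cA: "card A < card C"
    and inv: "\<forall>f. resp V E (D \<union> A) f \<longrightarrow> (\<forall>u\<in>Wn V E C. \<forall>u'\<in>Wn V E C. f u = f u')"
    and WV: "Wn V E C = V"
  shows "\<exists>S. D \<subseteq> S \<and> S \<subseteq> V \<and> good V E S \<and> card S \<le> 2 * card D"
proof (intro exI[of _ "D \<union> A"] conjI)
  have finV: "finite V" using g by (simp add: graph_def)
  have DV: "D \<subseteq> V" using dom by (simp add: dominating_def)
  have finD: "finite D" using finV DV finite_subset by blast
  show "D \<subseteq> D \<union> A" by blast
  show "D \<union> A \<subseteq> V" using DV AV by blast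
  show "good V E (D \<union> A)"
    unfolding good_def using inv WV by (simp add: resp_def)
  have "card C \<le> card D" using card_mono[OF finD CD] .
  moreover have "card (D \<union> A) \<le> card D + card A" by (rule card_Un_le)
  ultimately show "card (D \<union> A) \<le> 2 * card D" using cA by simp
qed

lemma grow:
  assumes g: "graph V E" and conn: "connected_graph V E" and dom: "dominating V E D"
  shows "card (D - C) = n \<Longrightarrow> C \<subseteq> D \<Longrightarrow> C \<noteq> {} \<Longrightarrow> A \<subseteq> V \<Longrightarrow> card A < card C \<Longrightarrow>
    (\<forall>f. resp V E (D \<union> A) f \<longrightarrow> (\<forall>u\<in>Wn V E C. \<forall>u'\<in>Wn V E C. f u = f u')) \<Longrightarrow>
    \<exists>S. D \<subseteq> S \<and> S \<subseteq> V \<and> good V E S \<and> card S \<le> 2 * card D"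
proof (induction n arbitrary: C A)
  case n: (0 C A)
  have finV: "finite V" using g by (simp add: graph_def)
  have DV: "D \<subseteq> V" using dom by (simp add: dominating_def)
  have finD: "finite D" using finV DV finite_subset by blast
  have "D - C = {}" using n.prems(1) finD by simp
  then have CD: "C = D" using n.prems(2) by blast
  have WV: "Wn V E C = V"
  proof
    show "Wn V E C \<subseteq> V" by (auto simp: Wn_def)
    show "V \<subseteq> Wn V E C"
    proof
      fix u assume u: "u \<in> V"
      then obtain d where "d \<in> D" "d \<in> cnbhd V E u" using dom unfolding dominating_def by blast
      then show "u \<in> Wn V E C" using u CD by (auto simp: Wn_def cnbhd_def)
    qed
  qed
  show ?case by (rule finish[OF g dom n.prems(2,4,5,6) WV])
next
  case (Suc m C A)
  have finV: "finite V" using g by (simp add: graph_def)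
  have DV: "D \<subseteq> V" using dom by (simp add: dominating_def)
  have finD: "finite D" using finV DV finite_subset by blast
  have finC: "finite C" using finD Suc.prems(2) finite_subset by blast
  have finA: "finite A" using Suc.prems(4) finV finite_subset by blast
  show ?case
  proof (cases "Wn V E C = V")
    case True
    show ?thesis by (rule finish[OF g dom Suc.prems(2,4,5,6) True])
  next
    case False
    then obtain b where b: "b \<in> V" "b \<notin> Wn V E C" by (auto simp: Wn_def)
    obtain c where c: "c \<in> C" using Suc.prems(3) by blast
    have cV: "c \<in> V" using c Suc.prems(2) DV by blast
    have cW: "c \<in> Wn V E C" using c cV by (auto simp: Wn_def)
    have "E\<^sup>*\<^sup>* c b" using conn cV b(1) by (simp add: connected_graph_def)
    from crossing[OF this cW b(2)] obtain p q where pq: "E p q" "p \<in> Wn V E C" "q \<notin> Wn V E C"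
      by blast
    have pV: "p \<in> V" and qV: "q \<in> V" using pq(1) g by (auto simp: graph_def)
    obtain d where d: "d \<in> D" "d \<in> cnbhd V E q" using dom qV unfolding dominating_def by blast
    have dq: "d = q \<or> E d q" using d(2) by (simp add: cnbhd_def)
    have dC: "d \<notin> C" using pq(3) qV dq by (auto simp: Wn_def)
    have c1: "card (D - insert d C) = m"
    proof -
      have "D - insert d C = (D - C) - {d}" by blast
      then show ?thesis using Suc.prems(1) d(1) dC finD by simp
    qed
    have c2: "insert d C \<subseteq> D" using d(1) Suc.prems(2) by blast
    have c4: "insert p A \<subseteq> V" using pV Suc.prems(4) by blast
    have c5: "card (insert p A) < card (insert d C)"
    proof -
      have "card (insert p A) \<le> Suc (card A)" by (simp add: card_insert_le_m1 card_insert_if finA)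
      then show ?thesis using Suc.prems(5) dC finC by simp
    qed
    have c6: "\<forall>f. resp V E (D \<union> insert p A) f \<longrightarrow>
        (\<forall>u\<in>Wn V E (insert d C). \<forall>u'\<in>Wn V E (insert d C). f u = f u')"
    proof (intro allI impI)
      fix f assume r: "resp V E (D \<union> insert p A) f"
      then have r0: "resp V E (D \<union> A) f" by (auto simp: resp_def)
      have old: "\<forall>u\<in>Wn V E C. f u = f p" using Suc.prems(6) r0 pq(2) by blast
      have fpq: "f p = f q" using r qV pq(1) unfolding resp_def by blast
      have fdq: "f d = f q" using r qV dq d(1) unfolding resp_def by blast
      have "\<forall>u\<in>Wn V E (insert d C). f u = f p"
      proof
        fix u assume u: "u \<in> Wn V E (insert d C)"
        show "f u = f p"
        proof (cases "u \<in> Wn V E C")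
          case True then show ?thesis using old by blast
        next
          case False
          then have "u \<in> V" "d = u \<or> E d u" using u by (auto simp: Wn_def)
          then have "f d = f u" using r d(1) unfolding resp_def by blast
          then show ?thesis using fpq fdq by simp
        qed
      qed
      then show "\<forall>u\<in>Wn V E (insert d C). \<forall>u'\<in>Wn V E (insert d C). f u = f u'" by simp
    qed
    show ?thesis by (rule Suc.IH[OF c1 c2 _ c4 c5 c6]) simp
  qed
qed

lemma build_S:
  assumes g: "graph V E" and conn: "connected_graph V E" and dom: "dominating V E D" and ne: "V \<noteq> {}"
  shows "\<exists>S. D \<subseteq> S \<and> S \<subseteq> V \<and> good V E S \<and> card S \<le> 2 * card D"
proof -
  obtain v where v: "v \<in> V" using ne by blast
  then obtain d0 where d0: "d0 \<in> D" "d0 \<in> cnbhd V E v" using dom unfolding dominating_def by blast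
  have inv: "\<forall>f. resp V E (D \<union> {}) f \<longrightarrow> (\<forall>u\<in>Wn V E {d0}. \<forall>u'\<in>Wn V E {d0}. f u = f u')"
  proof (intro allI impI)
    fix f assume r: "resp V E (D \<union> {}) f"
    have "\<forall>u\<in>Wn V E {d0}. f u = f d0" using r d0(1) by (auto simp: resp_def Wn_def)
    then show "\<forall>u\<in>Wn V E {d0}. \<forall>u'\<in>Wn V E {d0}. f u = f u'" by simp
  qed
  show ?thesis by (rule grow[OF g conn dom refl _ _ _ _ inv]) (use d0 in auto)
qed



definition lift1 :: "nat \<Rightarrow> 'v step list \<Rightarrow> 'v step list" where
  "lift1 k st = map (\<lambda>(v,l,f). (v, l, \<lambda>x vw. f (take k x) vw)) st"

definition lift2 :: "nat \<Rightarrow> nat \<Rightarrow> 'v step list \<Rightarrow> 'v step list" where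
  "lift2 k n st = map (\<lambda>(v,l,f). (v, l, \<lambda>x vw. f (drop k x) (drop n vw))) st"

definition compP :: "nat \<Rightarrow> 'v protocol \<Rightarrow> 'v protocol \<Rightarrow> 'v protocol" where
  "compP k P1 P2 = (lift1 k (fst P1) @ lift2 k (length (fst P1)) (fst P2),
     \<lambda>u x vw. snd P1 u (take k x) (take (length (fst P1)) vw) \<and>
              snd P2 u (drop k x) (drop (length (fst P1)) vw))"

lemma lift1_snoc: "lift1 k (st @ [(w,l,f)]) = lift1 k st @ [(w, l, \<lambda>x vw. f (take k x) vw)]"
  by (simp add: lift1_def)
lemma lift2_snoc: "lift2 k n (st @ [(w,l,f)]) = lift2 k n st @ [(w, l, \<lambda>x vw. f (drop k x) (drop n vw))]"
  by (simp add: lift2_def)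
lemma lift1_fst: "map fst (lift1 k st) = map fst st" by (induction st) (auto simp: lift1_def)
lemma lift2_fst: "map fst (lift2 k n st) = map fst st" by (induction st) (auto simp: lift2_def)

lemma exec_lift1: "snd (exec E (lift1 k st) lam) = snd (exec E st (\<lambda>v. take k (lam v)))"
proof (induction st rule: rev_induct)
  case Nil then show ?case by (simp add: exec_Nil lift1_def)
next
  case (snoc s st)
  obtain w l f where s: "s = (w,l,f)" by (cases s) auto
  show ?case using snoc by (simp add: s lift1_snoc exec_snoc' lift1_fst)
qed

lemma len_lift1: "length (lift1 k st) = length st" by (simp add: lift1_def)

lemma view_append: "length ss1 = length ms1 \<Longrightarrow>
   view_of E (ss1 @ ss2) (ms1 @ ms2) u = view_of E ss1 ms1 u @ view_of E ss2 ms2 u"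
  by (simp add: view_of_def)

lemma exec_lift2: "n = length A \<Longrightarrow> snd (exec E (A @ lift2 k n B) lam) =
    snd (exec E A lam) @ snd (exec E B (\<lambda>v. drop k (lam v)))"
proof (induction B rule: rev_induct)
  case Nil then show ?case by (simp add: exec_Nil lift2_def)
next
  case (snoc s B)
  obtain w l f where s: "s = (w,l,f)" by (cases s) auto
  have lA: "length (map fst A) = length (snd (exec E A lam))" by (simp add: exec_len')
  have e: "A @ lift2 k n (B @ [s]) = (A @ lift2 k n B) @ [(w, l, \<lambda>x vw. f (drop k x) (drop n vw))]"
    by (simp add: s lift2_snoc)
  have v: "drop n (view_of E (map fst (A @ lift2 k n B)) (snd (exec E (A @ lift2 k n B) lam)) w)
      = view_of E (map fst B) (snd (exec E B (\<lambda>v. drop k (lam v)))) w"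
    using snoc lA by (simp add: lift2_fst view_append view_of_len exec_len')
  show ?case unfolding e exec_snoc' v using snoc by (simp add: s exec_snoc')
qed

lemma accepts_comp: "accepts E (compP k P1 P2) lam u \<longleftrightarrow>
   accepts E P1 (\<lambda>v. take k (lam v)) u \<and> accepts E P2 (\<lambda>v. drop k (lam v)) u"
proof -
  define n where "n = length (fst P1)"
  have ex: "snd (exec E (fst (compP k P1 P2)) lam) =
     snd (exec E (fst P1) (\<lambda>v. take k (lam v))) @ snd (exec E (fst P2) (\<lambda>v. drop k (lam v)))"
    unfolding compP_def fst_conv
    using exec_lift2[of "length (lift1 k (fst P1))" "lift1 k (fst P1)" E k "fst P2" lam]
    by (simp add: exec_lift1 len_lift1)
  have fs: "map fst (fst (compP k P1 P2)) = map fst (fst P1) @ map fst (fst P2)"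
    by (simp add: compP_def lift1_fst lift2_fst)
  have l1: "length (map fst (fst P1)) = length (snd (exec E (fst P1) (\<lambda>v. take k (lam v))))"
    by (simp add: exec_len')
  have vw: "view_of E (map fst (fst (compP k P1 P2))) (snd (exec E (fst (compP k P1 P2)) lam)) u =
     view_of E (map fst (fst P1)) (snd (exec E (fst P1) (\<lambda>v. take k (lam v)))) u @
     view_of E (map fst (fst P2)) (snd (exec E (fst P2) (\<lambda>v. drop k (lam v)))) u"
    unfolding fs ex by (rule view_append[OF l1])
  have lv: "length (view_of E (map fst (fst P1)) (snd (exec E (fst P1) (\<lambda>v. take k (lam v)))) u) = n"
    by (simp add: view_of_len exec_len' n_def)
  show ?thesis
    unfolding accepts_alt[of E "compP k P1 P2"] vw accepts_alt[of E P1] accepts_alt[of E P2]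
    using lv by (simp add: compP_def n_def[symmetric])
qed

lemma lens_lift1: "map (\<lambda>(v,l,f). l) (lift1 k st) = map (\<lambda>(v,l,f). l) st"
  by (induction st) (auto simp: lift1_def)
lemma lens_lift2: "map (\<lambda>(v,l,f). l) (lift2 k n st) = map (\<lambda>(v,l,f). l) st"
  by (induction st) (auto simp: lift2_def)

lemma cost_comp: "cost (compP k P1 P2) = cost P1 + cost P2"
  by (simp add: cost_def compP_def lens_lift1 lens_lift2)

lemma solves_acc: "solves V E k P \<Longrightarrow> \<forall>v\<in>V. length (lam v) = k \<Longrightarrow>
   \<forall>u\<in>V. \<forall>v\<in>V. lam u = lam v \<Longrightarrow> w \<in> V \<Longrightarrow> accepts E P lam w"
  unfolding solves_def by (drule conjunct2, drule spec[of _ lam]) blast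

lemma solves_comp:
  assumes s1: "solves V E k1 P1" and s2: "solves V E k2 P2"
  shows "solves V E (k1 + k2) (compP k1 P1 P2)"
  unfolding solves_def
proof (intro conjI allI impI)
  show "\<forall>(v, l, f)\<in>set (fst (compP k1 P1 P2)). v \<in> V"
  proof -
    have "\<forall>(v, l, f)\<in>set (fst P1). v \<in> V"
      using s1 unfolding solves_def by (rule conjunct1)
    moreover have "\<forall>(v, l, f)\<in>set (fst P2). v \<in> V"
      using s2 unfolding solves_def by (rule conjunct1)
    ultimately have "set (map fst (fst P1)) \<subseteq> V" "set (map fst (fst P2)) \<subseteq> V" by auto
    then have "set (map fst (fst (compP k1 P1 P2))) \<subseteq> V"
      by (simp add: compP_def lift1_fst lift2_fst)
    then show ?thesis by auto
  qed
next
  fix lam :: "'a \<Rightarrow> bool list"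
  assume len: "\<forall>v\<in>V. length (lam v) = k1 + k2"
  have len1: "\<forall>v\<in>V. length ((\<lambda>v. take k1 (lam v)) v) = k1" using len by simp
  have len2: "\<forall>v\<in>V. length ((\<lambda>v. drop k1 (lam v)) v) = k2" using len by simp
  {
    assume c: "\<forall>u\<in>V. \<forall>v\<in>V. lam u = lam v"
    have a1: "\<forall>v\<in>V. accepts E P1 (\<lambda>v. take k1 (lam v)) v"
    proof
      fix v assume v: "v \<in> V"
      have "\<forall>u\<in>V. \<forall>v\<in>V. (\<lambda>v. take k1 (lam v)) u = (\<lambda>v. take k1 (lam v)) v"
        using c by metis
      from solves_acc[OF s1 len1 this v] show "accepts E P1 (\<lambda>v. take k1 (lam v)) v" .
    qed
    have a2: "\<forall>v\<in>V. accepts E P2 (\<lambda>v. drop k1 (lam v)) v"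
    proof
      fix v assume v: "v \<in> V"
      have "\<forall>u\<in>V. \<forall>v\<in>V. (\<lambda>v. drop k1 (lam v)) u = (\<lambda>v. drop k1 (lam v)) v"
        using c by metis
      from solves_acc[OF s2 len2 this v] show "accepts E P2 (\<lambda>v. drop k1 (lam v)) v" .
    qed
    show "\<forall>v\<in>V. accepts E (compP k1 P1 P2) lam v"
      using a1 a2 by (simp add: accepts_comp)
  }
  {
    assume "\<exists>u\<in>V. \<exists>v\<in>V. lam u \<noteq> lam v"
    then obtain a b where ab: "a \<in> V" "b \<in> V" "lam a \<noteq> lam b" by blast
    have "take k1 (lam a) \<noteq> take k1 (lam b) \<or> drop k1 (lam a) \<noteq> drop k1 (lam b)"
      using ab(3) by (metis append_take_drop_id)
    then show "\<exists>v\<in>V. \<not> accepts E (compP k1 P1 P2) lam v"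
    proof
      assume "take k1 (lam a) \<noteq> take k1 (lam b)"
      then have "\<exists>a\<in>V. \<exists>b\<in>V. (\<lambda>v. take k1 (lam v)) a \<noteq> (\<lambda>v. take k1 (lam v)) b" using ab by blast
      from solves_rej[OF s1 len1 this] show ?thesis by (auto simp: accepts_comp)
    next
      assume "drop k1 (lam a) \<noteq> drop k1 (lam b)"
      then have "\<exists>a\<in>V. \<exists>b\<in>V. (\<lambda>v. drop k1 (lam v)) a \<noteq> (\<lambda>v. drop k1 (lam v)) b" using ab by blast
      from solves_rej[OF s2 len2 this] show ?thesis by (auto simp: accepts_comp)
    qed
  }
qed

lemma opt_attained: "\<exists>P. solves V E k P \<Longrightarrow> \<exists>P. solves V E k P \<and> cost P = opt V E k"
proof -
  assume "\<exists>P. solves V E k P"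
  then have ne: "{cost P | P. solves V E k P} \<noteq> {}" by blast
  have "Inf {cost P | P. solves V E k P} \<in> {cost P | P. solves V E k P}"
    by (rule Inf_nat_def1[OF ne])
  then obtain P where "Inf {cost P | P. solves V E k P} = cost P" "solves V E k P"
    unfolding mem_Collect_eq by blast
  then show ?thesis unfolding opt_def by metis
qed

lemma opt_le: assumes "solves V E k P" shows "opt V E k \<le> cost P"
  unfolding opt_def
proof (rule cInf_lower)
  show "cost P \<in> {cost P |P. solves V E k P}" using assms unfolding mem_Collect_eq by blast
  show "bdd_below {cost P |P. solves V E k P}" by (rule bdd_belowI[of _ 0]) simp
qed

lemma opt_subadd:
  assumes ex: "\<forall>k. \<exists>P. solves V E k P"
  shows "opt V E (k1 + k2) \<le> opt V E k1 + opt V E k2"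
proof -
  obtain P1 where p1: "solves V E k1 P1" "cost P1 = opt V E k1" using opt_attained ex by blast
  obtain P2 where p2: "solves V E k2 P2" "cost P2 = opt V E k2" using opt_attained ex by blast
  have "opt V E (k1 + k2) \<le> cost (compP k1 P1 P2)" by (rule opt_le[OF solves_comp[OF p1(1) p2(1)]])
  then show ?thesis using p1 p2 by (simp add: cost_comp)
qed



lemma subadd_iter:
  fixes a :: "nat \<Rightarrow> nat"
  assumes sub: "\<And>m n. a (m+n) \<le> a m + a n"
  shows "a (q*m + s) \<le> q * a m + a s"
proof (induction q)
  case 0 then show ?case by simp
next
  case (Suc q)
  have "a (Suc q * m + s) = a (m + (q*m + s))" by (simp add: algebra_simps)
  also have "\<dots> \<le> a m + a (q*m+s)" by (rule sub)
  also have "\<dots> \<le> a m + (q * a m + a s)" using Suc by simp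
  finally show ?case by simp
qed

lemma fekete:
  fixes a :: "nat \<Rightarrow> nat"
  assumes sub: "\<And>m n. a (m+n) \<le> a m + a n"
  shows "convergent (\<lambda>n. real (a n) / real n)"
proof -
  define X where "X = {real (a n) / real n | n. n \<ge> 1}"
  define L where "L = Inf X"
  have Xne: "X \<noteq> {}" unfolding X_def by blast
  have Xbdd: "bdd_below X" unfolding X_def by (rule bdd_belowI[of _ 0]) auto
  have lower: "L \<le> real (a n) / real n" if "n \<ge> 1" for n
    unfolding L_def by (rule cInf_lower[OF _ Xbdd]) (use that in \<open>auto simp: X_def\<close>)
  have "(\<lambda>n. real (a n) / real n) \<longlonglongrightarrow> L"
  proof (rule metric_LIMSEQ_I)
    fix r :: real assume r: "r > 0"
    have "Inf X < L + r/2" using r by (simp add: L_def)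
    from cInf_lessD[OF Xne this] obtain m where m: "m \<ge> 1" "real (a m) / real m < L + r/2"
      unfolding X_def by blast
    define C where "C = (\<Sum>j<m. real (a j))"
    have C0: "C \<ge> 0" by (simp add: C_def sum_nonneg)
    obtain N :: nat where N: "real N > 2 * C / r" using reals_Archimedean2 by blast
    show "\<exists>no. \<forall>n\<ge>no. dist (real (a n) / real n) L < r"
    proof (intro exI[of _ "Suc N"] allI impI)
      fix n assume n: "n \<ge> Suc N"
      then have n1: "n \<ge> 1" and npos: "real n > 0" by auto
      define q where "q = n div m"
      define s where "s = n mod m"
      have ns: "n = q*m + s" by (simp add: q_def s_def)
      have sm: "s < m" using m by (simp add: s_def)
      have "a n \<le> q * a m + a s" unfolding ns by (rule subadd_iter[OF sub])
      moreover have "real (a s) \<le> C"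
        unfolding C_def by (rule member_le_sum) (use sm in auto)
      ultimately have an: "real (a n) \<le> real q * real (a m) + C"
        by (metis (mono_tags, opaque_lifting) add_left_mono of_nat_add of_nat_le_iff of_nat_mult order_trans)
      have qm: "real q * real m \<le> real n" unfolding ns by simp
      have "real q * real (a m) / real n \<le> real (a m) / real m"
      proof -
        have "real q * real (a m) * real m \<le> real (a m) * real n"
          using qm by (metis mult.commute mult.left_commute mult_left_mono of_nat_0_le_iff)
        then show ?thesis using npos m by (simp add: field_simps)
      qed
      moreover have "C / real n < r / 2"
      proof -
        have "real n > 2 * C / r" using N n by simp
        then have "real n * r > 2 * C" using r by (simp add: field_simps)
        then show ?thesis using npos by (simp add: field_simps)
      qed
      moreover have "real (a n) / real n \<le> real q * real (a m) / real n + C / real n"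
        using an npos by (simp add: add_divide_distrib[symmetric] divide_right_mono)
      ultimately have up: "real (a n) / real n < L + r" using m by linarith
      have lo: "L \<le> real (a n) / real n" by (rule lower[OF n1])
      show "dist (real (a n) / real n) L < r" using up lo by (simp add: dist_real_def)
    qed
  qed
  then show ?thesis by (rule convergentI)
qed



theorem corollary3p3:
  fixes V :: "'v set" and E :: "'v \<Rightarrow> 'v \<Rightarrow> bool"
  assumes "graph V E" and "connected_graph V E" and "card V \<ge> 2"
  shows "\<exists>ss. distinct ss \<and> set ss \<subseteq> V \<and> (\<forall>k. solves V E k (simple_protocol ss k)) \<and>
           real (card (set ss)) \<le>
             2 * (real (domination_number V E) / frac_domination_number V E) * opt_rate V E"
proof -
  note g = assms(1) and conn = assms(2) and c2 = assms(3)
  have finV: "finite V" using g by (simp add: graph_def)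
  have ne: "V \<noteq> {}" using c2 by auto
  define DS where "DS = {card D | D. dominating V E D}"
  have Vdom: "dominating V E V" by (auto simp: dominating_def cnbhd_def)
  have DSne: "DS \<noteq> {}" unfolding DS_def using Vdom by blast
  have DSfin: "finite DS"
  proof (rule finite_subset)
    show "DS \<subseteq> {..card V}"
    proof
      fix c assume "c \<in> DS"
      then obtain D where "c = card D" "dominating V E D" unfolding DS_def by blast
      then show "c \<in> {..card V}" using card_mono[OF finV] by (auto simp: dominating_def)
    qed
  qed simp
  have "Min DS \<in> DS" by (rule Min_in[OF DSfin DSne])
  then obtain D where D: "dominating V E D" "card D = domination_number V E"
    unfolding DS_def domination_number_def by auto
  obtain S where S: "D \<subseteq> S" "S \<subseteq> V" "good V E S" "card S \<le> 2 * card D"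
    using build_S[OF g conn D(1) ne] by blast
  have finS: "finite S" using S(2) finV finite_subset by blast
  obtain ss where ss: "distinct ss" "set ss = S" using finite_distinct_list[OF finS] by blast
  have sol: "\<forall>k. solves V E k (simple_protocol ss k)"
    using simple_solves[of ss V E] ss S by auto
  have ex: "\<forall>k. \<exists>P. solves V E k P" using sol by blast
  define a where "a = (\<lambda>k. opt V E k)"
  have sub: "a (m+n) \<le> a m + a n" for m n unfolding a_def by (rule opt_subadd[OF ex])
  have conv: "convergent (\<lambda>n. real (a n) / real n)" by (rule fekete[OF sub])
  then have lim: "(\<lambda>n. real (a n) / real n) \<longlonglongrightarrow> opt_rate V E"
    unfolding opt_rate_def a_def by (simp add: convergent_LIMSEQ_iff)
  define gf where "gf = frac_domination_number V E"
  have gf1: "gf \<ge> 1" unfolding gf_def by (rule frac_ge1[OF g ne])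
  have lowb: "gf \<le> real (a n) / real n" if n: "n \<ge> 1" for n
  proof -
    obtain P where P: "solves V E n P" "cost P = opt V E n" using opt_attained ex by blast
    have "gf * real n \<le> real (cost P)" unfolding gf_def by (rule frac_le[OF g c2 P(1) n])
    then show ?thesis using n P(2) by (simp add: a_def field_simps)
  qed
  have rate: "gf \<le> opt_rate V E"
    by (rule LIMSEQ_le_const[OF lim]) (use lowb in \<open>auto intro!: exI[of _ 1]\<close>)
  define gam where "gam = real (domination_number V E)"
  have "gam / gf * gf \<le> gam / gf * opt_rate V E"
    by (rule mult_left_mono[OF rate]) (use gf1 in \<open>simp add: gam_def\<close>)
  then have "gam \<le> gam / gf * opt_rate V E" using gf1 by simp
  moreover have "real (card (set ss)) \<le> 2 * gam" using S(4) ss(2) D(2) by (simp add: gam_def)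
  ultimately have "real (card (set ss)) \<le> 2 * (gam / gf * opt_rate V E)" by linarith
  then have fin: "real (card (set ss)) \<le> 2 * (gam / gf) * opt_rate V E" by (simp add: mult.assoc)
  show ?thesis
    using ss S sol fin by (auto simp: gam_def gf_def intro!: exI[of _ ss])
qed


end
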